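(* Let $R$ be a ring with unity and involution $*$, and let $a,b,c\in R$ with $a$ left dual $(b,c)$-core invertible. Then for any inner inverse $(cab)^-$ of $cab$ and any $\{1,4\}$-inverse $b^{(1,4)}$ of $b$, the element $b^{(1,4)}b(cab)^-c$ is a left dual $(b,c)$-core inverse of $a$.
   Context: An element $a\in R$ is called left dual $(b,c)$-core invertible if there exists $x\in Rc$ such that $bxab=b$ and $(xab)^*=xab$; such an $x$ is called a left dual $(b,c)$-core inverse of $a$. An inner inverse of $y$ is any $z$ with $yzy=y$. A $\{1,4\}$-inverse of $y$ is any $z$ with $yzy=y$ and $(zy)^*=zy$. *)

theory Defs
  imports Main
begin

class ring_invol = ring_1 +
  fixes invol :: "'a \<Rightarrow> 'a"
  assumes invol_add: "invol (x + y) = invol x + invol y"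
      and invol_mult: "invol (x * y) = invol y * invol x"
      and invol_invol: "invol (invol x) = x"

definition left_dual_bc_core_inverse :: "'a::ring_invol \<Rightarrow> 'a \<Rightarrow> 'a \<Rightarrow> 'a \<Rightarrow> bool" where
  "left_dual_bc_core_inverse a b c x \<longleftrightarrow>
     (\<exists>r. x = r * c) \<and> b * x * a * b = b \<and> invol (x * a * b) = x * a * b"

definition left_dual_bc_core_invertible :: "'a::ring_invol \<Rightarrow> 'a \<Rightarrow> 'a \<Rightarrow> bool" where
  "left_dual_bc_core_invertible a b c \<longleftrightarrow> (\<exists>x. left_dual_bc_core_inverse a b c x)"

definition inner_inverse :: "'a::ring_invol \<Rightarrow> 'a \<Rightarrow> bool" where
  "inner_inverse y z \<longleftrightarrow> y * z * y = y"

definition inverse_14 :: "'a::ring_invol \<Rightarrow> 'a \<Rightarrow> bool" where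
  "inverse_14 y z \<longleftrightarrow> y * z * y = y \<and> invol (z * y) = z * y"

end

theory Submission
  imports Defs
begin

theorem proposition2p7:
  fixes a b c g h :: "'a::ring_invol"
  assumes "left_dual_bc_core_invertible a b c"
      and "inner_inverse (c * a * b) g"
      and "inverse_14 b h"
  shows "left_dual_bc_core_inverse a b c (h * b * g * c)"
proof -
  obtain x r where x: "x = r * c" "b * x * a * b = b"
    using assms(1) unfolding left_dual_bc_core_invertible_def left_dual_bc_core_inverse_def by blast
  have g: "c * a * b * g * (c * a * b) = c * a * b" using assms(2) unfolding inner_inverse_def
    by (simp add: mult.assoc)
  have h: "b * h * b = b" "invol (h * b) = h * b" using assms(3) unfolding inverse_14_def by auto
  have u: "(b * r) * (c * a * b) = b" using x by (simp add: mult.assoc)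
  have k: "b * g * (c * a * b) = b"
  proof -
    have "b * g * (c * a * b) = (b * r) * (c * a * b * g * (c * a * b))"
      using u by (metis mult.assoc)
    also have "\<dots> = b" using g u by simp
    finally show ?thesis .
  qed
  have e1: "b * (h * b * g * c) * a * b = b"
  proof -
    have "b * (h * b * g * c) * a * b = (b * h * b) * g * (c * a * b)" by (simp add: mult.assoc)
    also have "\<dots> = b" using h(1) k by simp
    finally show ?thesis .
  qed
  have e2: "h * b * g * c * a * b = h * b"
  proof -
    have "h * b * g * c * a * b = h * (b * g * (c * a * b))" by (simp add: mult.assoc)
    thus ?thesis using k by (simp add: mult.assoc)
  qed
  show ?thesis unfolding left_dual_bc_core_inverse_def
    using e1 e2 h(2) by (metis mult.assoc)
qed

end
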